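(* Let $G$ be a graph with vertex set $V(G)=\{u_1,\ldots,u_n\}$ and let $H_1,\ldots,H_n$ be pairwise disjoint graphs such that at least one of the $H_i$ is not a complete graph. Let $M=\max\Big\{\sum_{j=1}^k box(H_{i_j}) : \{u_{i_1},\ldots,u_{i_k}\}\text{ is a clique in } G \text{ and each } H_{i_j} \text{ is not a complete graph}\Big\}.$ Then $M\leq box(G[H_1,H_2,\ldots,H_n])\leq \sum_{i=1}^n box(H_i)$.
   Context: All graphs are simple, finite and undirected. For a graph $G$ with vertex set $\{u_1,\ldots,u_n\}$ and pairwise disjoint graphs $H_1,\ldots,H_n$, the $G$-generalized join $G[H_1,\ldots,H_n]$ is the graph obtained from $G$ by replacing each vertex $u_i$ by $H_i$ and joining every vertex of $H_i$ to every vertex of $H_j$ whenever $u_i$ is adjacent to $u_j$ in $G$ (no other edges between different $H_i$'s). An $\ell$-box is a Cartesian product of $\ell$ closed bounded real intervals; the boxicity $box(G)$ of a graph $G$ is the least positive integer $\ell$ such that $G$ is isomorphic to the intersection graph of a family of $\ell$-boxes. A clique in $G$ is a set of pairwise adjacent vertices (a single vertex is a clique). *)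

theory Defs
  imports Complex_Main
begin

definition simple_graph :: "'a set \<Rightarrow> ('a \<Rightarrow> 'a \<Rightarrow> bool) \<Rightarrow> bool" where
  "simple_graph V E \<longleftrightarrow> finite V \<and> (\<forall>x y. E x y \<longrightarrow> x \<in> V \<and> y \<in> V)
     \<and> (\<forall>x y. E x y \<longrightarrow> E y x) \<and> (\<forall>x. \<not> E x x)"

definition complete_graph :: "'a set \<Rightarrow> ('a \<Rightarrow> 'a \<Rightarrow> bool) \<Rightarrow> bool" where
  "complete_graph V E \<longleftrightarrow> (\<forall>x\<in>V. \<forall>y\<in>V. x \<noteq> y \<longrightarrow> E x y)"

definition is_clique :: "'a set \<Rightarrow> ('a \<Rightarrow> 'a \<Rightarrow> bool) \<Rightarrow> 'a set \<Rightarrow> bool" where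
  "is_clique V E C \<longleftrightarrow> C \<subseteq> V \<and> (\<forall>x\<in>C. \<forall>y\<in>C. x \<noteq> y \<longrightarrow> E x y)"

text \<open>An l-box is given by l closed bounded intervals [fst (b i), snd (b i)], i < l.
  Two boxes intersect iff in every coordinate the intervals intersect.\<close>
definition boxes_intersect :: "nat \<Rightarrow> (nat \<Rightarrow> real \<times> real) \<Rightarrow> (nat \<Rightarrow> real \<times> real) \<Rightarrow> bool" where
  "boxes_intersect l b c \<longleftrightarrow> (\<forall>i<l. max (fst (b i)) (fst (c i)) \<le> min (snd (b i)) (snd (c i)))"

definition box_representable :: "'a set \<Rightarrow> ('a \<Rightarrow> 'a \<Rightarrow> bool) \<Rightarrow> nat \<Rightarrow> bool" where
  "box_representable V E l \<longleftrightarrow> (\<exists>B :: 'a \<Rightarrow> nat \<Rightarrow> real \<times> real.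
      (\<forall>x\<in>V. \<forall>i<l. fst (B x i) \<le> snd (B x i)) \<and>
      (\<forall>x\<in>V. \<forall>y\<in>V. x \<noteq> y \<longrightarrow> (E x y \<longleftrightarrow> boxes_intersect l (B x) (B y))))"

definition boxicity :: "'a set \<Rightarrow> ('a \<Rightarrow> 'a \<Rightarrow> bool) \<Rightarrow> nat" where
  "boxicity V E = (LEAST l. 0 < l \<and> box_representable V E l)"

text \<open>G-generalized join: vertex u of G is replaced by a disjoint copy of H u;
  realised on the disjoint union Sigma VG VH.\<close>
definition gjoin_verts :: "'v set \<Rightarrow> ('v \<Rightarrow> 'a set) \<Rightarrow> ('v \<times> 'a) set" where
  "gjoin_verts VG VH = Sigma VG VH"

definition gjoin_adj :: "('v \<Rightarrow> 'v \<Rightarrow> bool) \<Rightarrow> ('v \<Rightarrow> 'a \<Rightarrow> 'a \<Rightarrow> bool)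
    \<Rightarrow> 'v \<times> 'a \<Rightarrow> 'v \<times> 'a \<Rightarrow> bool" where
  "gjoin_adj EG EH p q \<longleftrightarrow> (fst p = fst q \<and> EH (fst p) (snd p) (snd q)) \<or> EG (fst p) (fst q)"

end

theory Submission imports Defs begin

lemma rep_exists:
  assumes "finite V" and sym: "\<forall>x y. E x y \<longrightarrow> E y x"
  shows "box_representable V E (Suc (card V))"
proof -
  obtain xs where xs: "set xs = V" "distinct xs" using assms(1) finite_distinct_list by blast
  define B where "B = (\<lambda>y i. if i < length xs then (if y = xs!i then (0::real,0::real)
      else if E (xs!i) y then (0,1) else (1,1)) else (0,1))"
  have len: "length xs = card V" using xs distinct_card by fastforce
  have "\<forall>x\<in>V. \<forall>y\<in>V. x \<noteq> y \<longrightarrow> (E x y \<longleftrightarrow> boxes_intersect (Suc (card V)) (B x) (B y))"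
  proof (intro ballI impI iffI)
    fix x y assume "x \<in> V" "y \<in> V" "x \<noteq> y" "E x y"
    then have "E y x" using sym by blast
    then show "boxes_intersect (Suc (card V)) (B x) (B y)"
      using \<open>E x y\<close> \<open>x \<noteq> y\<close> unfolding boxes_intersect_def B_def by auto
  next
    fix x y assume "x \<in> V" "y \<in> V" "x \<noteq> y" "boxes_intersect (Suc (card V)) (B x) (B y)"
    obtain i where i: "i < length xs" "xs!i = x" using \<open>x \<in> V\<close> xs(1) by (metis in_set_conv_nth)
    then have "max (fst (B x i)) (fst (B y i)) \<le> min (snd (B x i)) (snd (B y i))"
      using \<open>boxes_intersect _ _ _\<close> len unfolding boxes_intersect_def by auto
    then show "E x y" using i \<open>x \<noteq> y\<close> unfolding B_def by (auto split: if_splits)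
  qed
  moreover have "\<forall>x\<in>V. \<forall>i<Suc (card V). fst (B x i) \<le> snd (B x i)" unfolding B_def by auto
  ultimately show ?thesis unfolding box_representable_def by blast
qed

lemma boxicity_rep:
  assumes "finite V" and "\<forall>x y. E x y \<longrightarrow> E y x"
  shows "box_representable V E (boxicity V E) \<and> 0 < boxicity V E"
  unfolding boxicity_def
  using LeastI[of "\<lambda>l. 0 < l \<and> box_representable V E l" "Suc (card V)"] rep_exists[OF assms] by auto

lemma boxicity_le:
  assumes "0 < l" "box_representable V E l"
  shows "boxicity V E \<le> l"
  unfolding boxicity_def by (rule Least_le) (use assms in auto)

lemma restrict_rep:
  fixes B :: "'a \<Rightarrow> 'b \<Rightarrow> real \<times> real"
  assumes "finite S"
    and "\<forall>x\<in>V. \<forall>i\<in>S. fst (B x i) \<le> snd (B x i)"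
    and "\<forall>x\<in>V. \<forall>y\<in>V. x \<noteq> y \<longrightarrow> (E x y \<longleftrightarrow>
          (\<forall>i\<in>S. max (fst (B x i)) (fst (B y i)) \<le> min (snd (B x i)) (snd (B y i))))"
  shows "box_representable V E (card S)"
proof -
  obtain h where h: "bij_betw h {0..<card S} S" using ex_bij_betw_nat_finite[OF assms(1)] by blast
  define B' where "B' = (\<lambda>x j. B x (h j))"
  have eq: "(\<forall>i\<in>S. P i) \<longleftrightarrow> (\<forall>j<card S. P (h j))" for P
  proof
    assume "\<forall>i\<in>S. P i" then show "\<forall>j<card S. P (h j)" using h unfolding bij_betw_def by auto
  next
    assume a: "\<forall>j<card S. P (h j)"
    show "\<forall>i\<in>S. P i"
    proof
      fix i assume "i \<in> S"
      then obtain j where "j \<in> {0..<card S}" "i = h j" using h unfolding bij_betw_def by blast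
      then show "P i" using a by auto
    qed
  qed
  show ?thesis unfolding box_representable_def boxes_intersect_def
    apply (rule exI[where x=B'])
    using assms(2,3) unfolding B'_def eq by auto
qed

lemma c4:
  fixes a1 b1 c1 d1 a2 b2 c2 d2 :: real
  assumes "a1 \<le> b1" "c1 \<le> d1" "a2 \<le> b2" "c2 \<le> d2"
    "\<not> max a1 c1 \<le> min b1 d1" "\<not> max a2 c2 \<le> min b2 d2"
    "max a1 a2 \<le> min b1 b2" "max a1 c2 \<le> min b1 d2"
    "max c1 a2 \<le> min d1 b2" "max c1 c2 \<le> min d1 d2"
  shows False
  using assms by (auto simp: max_def min_def split: if_splits)

definition sq :: "real \<Rightarrow> real" where "sq t = t / (1 + \<bar>t\<bar>)"

lemma sq_bounds: "-1 < sq t" "sq t < 1"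
  unfolding sq_def by (auto simp: divide_simps abs_if)

lemma sq_le_iff: "sq s \<le> sq t \<longleftrightarrow> s \<le> t"
proof -
  have "sq s \<le> sq t \<longleftrightarrow> s * (1 + \<bar>t\<bar>) \<le> t * (1 + \<bar>s\<bar>)"
    unfolding sq_def by (simp add: divide_simps add_pos_nonneg)
  also have "\<dots> \<longleftrightarrow> s \<le> t"
  proof (cases "s < 0"; cases "t < 0")
    assume "s < 0" "\<not> t < 0"
    then have "s * t \<le> 0" by (simp add: mult_nonpos_nonneg)
    then show ?thesis using \<open>s<0\<close> \<open>\<not> t < 0\<close> by (simp add: algebra_simps)
  next
    assume "\<not> s < 0" "t < 0"
    then have "s * t \<le> 0" by (simp add: mult_nonneg_nonpos)
    then show ?thesis using \<open>\<not> s<0\<close> \<open>t < 0\<close> by (simp add: algebra_simps)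
  qed (auto simp: algebra_simps)
  finally show ?thesis .
qed

lemma sq_mono: "s \<le> t \<Longrightarrow> sq s \<le> sq t"
  by (simp add: sq_le_iff)


lemma sq_inter: "max (sq a) (sq c) \<le> min (sq b) (sq d) \<longleftrightarrow> max a c \<le> min b d"
proof -
  have "max (sq a) (sq c) = sq (max a c)" by (simp add: max_def sq_le_iff)
  moreover have "min (sq b) (sq d) = sq (min b d)" by (simp add: min_def sq_le_iff)
  ultimately show ?thesis by (simp add: sq_le_iff)
qed

lemma bij_all:
  fixes n :: nat
  assumes "bij_betw h {0..<n} P"
  shows "(\<forall>j<n. Q (h j)) \<longleftrightarrow> (\<forall>z\<in>P. Q z)"
proof
  assume a: "\<forall>j<n. Q (h j)"
  show "\<forall>z\<in>P. Q z"
  proof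
    fix z assume "z \<in> P"
    then obtain j where "j \<in> {0..<n}" "z = h j" using assms unfolding bij_betw_def by blast
    then show "Q z" using a by auto
  qed
next
  assume a: "\<forall>z\<in>P. Q z"
  show "\<forall>j<n. Q (h j)"
  proof (intro allI impI)
    fix j assume "j < n"
    then have "h j \<in> P" using assms unfolding bij_betw_def by force
    then show "Q (h j)" using a by blast
  qed
qed

lemma upper_rep:
  assumes G: "simple_graph VG EG"
    and H: "\<forall>u\<in>VG. simple_graph (VH u) (EH u)"
  shows "box_representable (gjoin_verts VG VH) (gjoin_adj EG EH) (\<Sum>u\<in>VG. boxicity (VH u) (EH u))"
proof -
  define b where "b u = boxicity (VH u) (EH u)" for u
  have "\<forall>u\<in>VG. \<exists>R. (\<forall>x\<in>VH u. \<forall>i<b u. fst (R x i) \<le> snd (R x i)) \<and>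
      (\<forall>x\<in>VH u. \<forall>y\<in>VH u. x \<noteq> y \<longrightarrow> (EH u x y \<longleftrightarrow> boxes_intersect (b u) (R x) (R y))) \<and> 0 < b u"
  proof
    fix u assume "u \<in> VG"
    then have "finite (VH u)" "\<forall>x y. EH u x y \<longrightarrow> EH u y x" using H unfolding simple_graph_def by auto
    from boxicity_rep[OF this] show "\<exists>R. (\<forall>x\<in>VH u. \<forall>i<b u. fst (R x i) \<le> snd (R x i)) \<and>
      (\<forall>x\<in>VH u. \<forall>y\<in>VH u. x \<noteq> y \<longrightarrow> (EH u x y \<longleftrightarrow> boxes_intersect (b u) (R x) (R y))) \<and> 0 < b u"
      unfolding b_def box_representable_def by blast
  qed
  then obtain R where R: "\<And>u. u \<in> VG \<Longrightarrow> (\<forall>x\<in>VH u. \<forall>i<b u. fst (R u x i) \<le> snd (R u x i)) \<and>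
      (\<forall>x\<in>VH u. \<forall>y\<in>VH u. x \<noteq> y \<longrightarrow> (EH u x y \<longleftrightarrow> boxes_intersect (b u) (R u x) (R u y))) \<and> 0 < b u"
    by metis
  have finG: "finite VG" and symG: "\<And>x y. EG x y \<Longrightarrow> EG y x" and irrG: "\<And>x. \<not> EG x x"
    using G unfolding simple_graph_def by auto
  define P where "P = Sigma VG (\<lambda>u. {..<b u})"
  have cardP: "card P = (\<Sum>u\<in>VG. b u)" unfolding P_def using finG by simp
  obtain h where h: "bij_betw h {0..<card P} P" using ex_bij_betw_nat_finite[of P] finG P_def by auto
  define C where "C p z = (if fst p = fst z then (sq (fst (R (fst z) (snd p) (snd z))), sq (snd (R (fst z) (snd p) (snd z))))
      else if EG (fst p) (fst z) then (-2::real, 2::real) else (2, 2))" for p :: "'a \<times> 'b" and z :: "'a \<times> nat"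
  define I where "I p q z = (max (fst (C p z)) (fst (C q z)) \<le> min (snd (C p z)) (snd (C q z)))" for p q z
  define B where "B p j = C p (h j)" for p j
  have wf: "fst (C p z) \<le> snd (C p z)" if "p \<in> Sigma VG VH" "z \<in> P" for p z
    using that R[of "fst p"] unfolding C_def P_def by (auto simp: sq_le_iff)
  have sqb: "-1 < sq t" "sq t < 1" for t using sq_bounds by auto
  have main: "gjoin_adj EG EH p q \<longleftrightarrow> (\<forall>z\<in>P. I p q z)"
    if p: "p \<in> Sigma VG VH" and q: "q \<in> Sigma VG VH" and pq: "p \<noteq> q" for p q
  proof (cases "fst p = fst q")
    case True
    define u where "u = fst p"
    have u: "u \<in> VG" using p u_def by auto
    have xy: "snd p \<noteq> snd q" using True pq by (metis prod.expand)
    have "gjoin_adj EG EH p q \<longleftrightarrow> EH u (snd p) (snd q)"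
      unfolding gjoin_adj_def using True irrG u_def by auto
    also have "\<dots> \<longleftrightarrow> boxes_intersect (b u) (R u (snd p)) (R u (snd q))"
      using R[OF u] p q True xy u_def by auto
    also have "\<dots> \<longleftrightarrow> (\<forall>z\<in>P. I p q z)"
    proof -
      have other: "I p q z" if "z \<in> P" "fst z \<noteq> u" for z
        using wf[OF p that(1)] True that(2) u_def unfolding I_def C_def by auto
      have same: "I p q (u, k) \<longleftrightarrow> max (fst (R u (snd p) k)) (fst (R u (snd q) k)) \<le> min (snd (R u (snd p) k)) (snd (R u (snd q) k))" for k
        unfolding I_def C_def using True u_def by (simp only: sq_inter fst_conv snd_conv if_True simp_thms)
      show ?thesis unfolding boxes_intersect_def
      proof
        assume a: "\<forall>i<b u. max (fst (R u (snd p) i)) (fst (R u (snd q) i)) \<le> min (snd (R u (snd p) i)) (snd (R u (snd q) i))"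
        show "\<forall>z\<in>P. I p q z"
        proof
          fix z assume z: "z \<in> P"
          show "I p q z"
          proof (cases "fst z = u")
            case True
            then have "z = (u, snd z)" "snd z < b u" using z P_def by auto
            then show ?thesis using a same by metis
          qed (use other z in auto)
        qed
      next
        assume a: "\<forall>z\<in>P. I p q z"
        show "\<forall>i<b u. max (fst (R u (snd p) i)) (fst (R u (snd q) i)) \<le> min (snd (R u (snd p) i)) (snd (R u (snd q) i))"
        proof (intro allI impI)
          fix i assume "i < b u"
          then have "(u, i) \<in> P" using u P_def by auto
          then show "max (fst (R u (snd p) i)) (fst (R u (snd q) i)) \<le> min (snd (R u (snd p) i)) (snd (R u (snd q) i))"
            using a same by blast
        qed
      qed
    qed
    finally show ?thesis .
  next
    case False
    have "gjoin_adj EG EH p q \<longleftrightarrow> EG (fst p) (fst q)" unfolding gjoin_adj_def using False by auto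
    also have "\<dots> \<longleftrightarrow> (\<forall>z\<in>P. I p q z)"
    proof
      assume e: "EG (fst p) (fst q)"
      then have e': "EG (fst q) (fst p)" using symG by blast
      show "\<forall>z\<in>P. I p q z"
      proof
        fix z assume z: "z \<in> P"
        show "I p q z" unfolding I_def C_def using False e e' sqb[of "fst (R (fst z) (snd p) (snd z))"]
          sqb[of "snd (R (fst z) (snd p) (snd z))"] sqb[of "fst (R (fst z) (snd q) (snd z))"]
          sqb[of "snd (R (fst z) (snd q) (snd z))"] wf[OF p z] wf[OF q z] by (auto simp: C_def)
      qed
    next
      assume a: "\<forall>z\<in>P. I p q z"
      have "0 < b (fst p)" using R p by auto
      then have "(fst p, 0) \<in> P" using p P_def by auto
      then have "I p q (fst p, 0)" using a by blast
      then show "EG (fst p) (fst q)" unfolding I_def C_def using False sqb[of "fst (R (fst p) (snd p) 0)"]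
          sqb[of "snd (R (fst p) (snd p) 0)"] symG by (auto split: if_splits)
    qed
    finally show ?thesis .
  qed
  show ?thesis unfolding box_representable_def
  proof (intro exI[where x=B] conjI ballI allI impI)
    fix x i assume "x \<in> gjoin_verts VG VH" "i < (\<Sum>u\<in>VG. boxicity (VH u) (EH u))"
    moreover have "h i \<in> P" using h \<open>i < _\<close> cardP b_def unfolding bij_betw_def by force
    ultimately show "fst (B x i) \<le> snd (B x i)" unfolding B_def gjoin_verts_def
      using wf by blast
  next
    fix x y assume xy: "x \<in> gjoin_verts VG VH" "y \<in> gjoin_verts VG VH" "x \<noteq> y"
    have "boxes_intersect (\<Sum>u\<in>VG. boxicity (VH u) (EH u)) (B x) (B y) \<longleftrightarrow> (\<forall>j<card P. I x y (h j))"
      unfolding boxes_intersect_def B_def I_def cardP b_def by simp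
    also have "\<dots> \<longleftrightarrow> (\<forall>z\<in>P. I x y z)" using bij_all[OF h] .
    finally show "gjoin_adj EG EH x y \<longleftrightarrow> boxes_intersect (\<Sum>u\<in>VG. boxicity (VH u) (EH u)) (B x) (B y)"
      using main xy unfolding gjoin_verts_def by auto
  qed
qed


lemma lower_bound:
  assumes G: "simple_graph VG EG"
    and H: "\<forall>u\<in>VG. simple_graph (VH u) (EH u)"
    and C: "is_clique VG EG C"
    and nc: "\<forall>u\<in>C. \<not> complete_graph (VH u) (EH u)"
    and rep: "box_representable (gjoin_verts VG VH) (gjoin_adj EG EH) l"
  shows "(\<Sum>u\<in>C. boxicity (VH u) (EH u)) \<le> l"
proof -
  obtain B where wfB: "\<forall>p\<in>Sigma VG VH. \<forall>i<l. fst (B p i) \<le> snd (B p i)"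
    and adjB: "\<forall>p\<in>Sigma VG VH. \<forall>q\<in>Sigma VG VH. p \<noteq> q \<longrightarrow> (gjoin_adj EG EH p q \<longleftrightarrow> boxes_intersect l (B p) (B q))"
    using rep unfolding box_representable_def gjoin_verts_def by blast
  have finG: "finite VG" and irrG: "\<And>x. \<not> EG x x"
    using G unfolding simple_graph_def by auto
  have CV: "C \<subseteq> VG" and Cadj: "\<And>u v. u \<in> C \<Longrightarrow> v \<in> C \<Longrightarrow> u \<noteq> v \<Longrightarrow> EG u v"
    using C unfolding is_clique_def by auto
  have finC: "finite C" using CV finG finite_subset by blast
  define J where "J p q i = (max (fst (B p i)) (fst (B q i)) \<le> min (snd (B p i)) (snd (B q i)))" for p q i
  define S where "S u = {i. i < l \<and> (\<exists>x\<in>VH u. \<exists>y\<in>VH u. \<not> J (u, x) (u, y) i)}" for u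
  have Ssub: "S u \<subseteq> {..<l}" for u unfolding S_def by auto
  have finS: "finite (S u)" for u using Ssub finite_subset by blast
  have bS: "boxicity (VH u) (EH u) \<le> card (S u)" if u: "u \<in> C" for u
  proof -
    have uV: "u \<in> VG" using u CV by auto
    have eq: "EH u x y \<longleftrightarrow> (\<forall>i\<in>S u. J (u, x) (u, y) i)" if "x \<in> VH u" "y \<in> VH u" "x \<noteq> y" for x y
    proof -
      have "EH u x y \<longleftrightarrow> gjoin_adj EG EH (u, x) (u, y)" unfolding gjoin_adj_def using irrG by auto
      also have "\<dots> \<longleftrightarrow> boxes_intersect l (B (u, x)) (B (u, y))" using adjB that uV by auto
      also have "\<dots> \<longleftrightarrow> (\<forall>i<l. J (u, x) (u, y) i)" unfolding boxes_intersect_def J_def by simp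
      also have "\<dots> \<longleftrightarrow> (\<forall>i\<in>S u. J (u, x) (u, y) i)" unfolding S_def using that by auto
      finally show ?thesis .
    qed
    have "box_representable (VH u) (EH u) (card (S u))"
    proof (rule restrict_rep[where B="\<lambda>x i. B (u, x) i"])
      show "finite (S u)" by (rule finS)
      show "\<forall>x\<in>VH u. \<forall>i\<in>S u. fst (B (u, x) i) \<le> snd (B (u, x) i)"
        using wfB uV unfolding S_def by auto
      show "\<forall>x\<in>VH u. \<forall>y\<in>VH u. x \<noteq> y \<longrightarrow> (EH u x y \<longleftrightarrow>
          (\<forall>i\<in>S u. max (fst (B (u, x) i)) (fst (B (u, y) i)) \<le> min (snd (B (u, x) i)) (snd (B (u, y) i))))"
        using eq unfolding J_def by blast
    qed
    moreover have "0 < card (S u)"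
    proof -
      obtain x y where xy: "x \<in> VH u" "y \<in> VH u" "x \<noteq> y" "\<not> EH u x y"
        using nc u unfolding complete_graph_def by blast
      then obtain i where "i \<in> S u" "\<not> J (u, x) (u, y) i" using eq by blast
      then show ?thesis using finS card_gt_0_iff by blast
    qed
    ultimately show ?thesis using boxicity_le by blast
  qed
  have disj: "S u \<inter> S v = {}" if "u \<in> C" "v \<in> C" "u \<noteq> v" for u v
  proof (rule ccontr)
    assume "S u \<inter> S v \<noteq> {}"
    then obtain i where i: "i \<in> S u" "i \<in> S v" by blast
    obtain x1 y1 where 1: "x1 \<in> VH u" "y1 \<in> VH u" "\<not> J (u, x1) (u, y1) i" "i < l" using i S_def by blast
    obtain x2 y2 where 2: "x2 \<in> VH v" "y2 \<in> VH v" "\<not> J (v, x2) (v, y2) i" using i S_def by blast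
    have uv: "u \<in> VG" "v \<in> VG" "EG u v" using that CV Cadj by auto
    have cross: "J (u, a) (v, c) i" if "a \<in> VH u" "c \<in> VH v" for a c
    proof -
      have "gjoin_adj EG EH (u, a) (v, c)" unfolding gjoin_adj_def using uv by auto
      then have "boxes_intersect l (B (u, a)) (B (v, c))" using adjB that uv \<open>u \<noteq> v\<close> by auto
      then show ?thesis using 1(4) unfolding boxes_intersect_def J_def by auto
    qed
    show False
      apply (rule c4[of "fst (B (u, x1) i)" "snd (B (u, x1) i)" "fst (B (u, y1) i)" "snd (B (u, y1) i)"
            "fst (B (v, x2) i)" "snd (B (v, x2) i)" "fst (B (v, y2) i)" "snd (B (v, y2) i)"])
      using wfB 1 2 uv cross[of x1 x2] cross[of x1 y2] cross[of y1 x2] cross[of y1 y2] unfolding J_def by auto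
  qed
  have "(\<Sum>u\<in>C. boxicity (VH u) (EH u)) \<le> (\<Sum>u\<in>C. card (S u))" using bS by (rule sum_mono)
  also have "\<dots> = card (\<Union>(S ` C))" using card_UN_disjoint[OF finC] finS disj by metis
  also have "\<dots> \<le> card {..<l}" by (rule card_mono) (use Ssub in auto)
  finally show ?thesis by simp
qed


theorem theorem3p1:
  fixes VG :: "'v set" and EG :: "'v \<Rightarrow> 'v \<Rightarrow> bool"
    and VH :: "'v \<Rightarrow> 'a set" and EH :: "'v \<Rightarrow> 'a \<Rightarrow> 'a \<Rightarrow> bool"
  assumes "simple_graph VG EG"
    and "\<forall>u\<in>VG. simple_graph (VH u) (EH u)"
    and "\<exists>u\<in>VG. \<not> complete_graph (VH u) (EH u)"
  shows "Max {(\<Sum>u\<in>C. boxicity (VH u) (EH u)) | C.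
              is_clique VG EG C \<and> (\<forall>u\<in>C. \<not> complete_graph (VH u) (EH u))}
           \<le> boxicity (gjoin_verts VG VH) (gjoin_adj EG EH)
       \<and> boxicity (gjoin_verts VG VH) (gjoin_adj EG EH) \<le> (\<Sum>u\<in>VG. boxicity (VH u) (EH u))"
proof -
  let ?s = "\<Sum>u\<in>VG. boxicity (VH u) (EH u)"
  let ?b = "boxicity (gjoin_verts VG VH) (gjoin_adj EG EH)"
  have finG: "finite VG" using assms(1) unfolding simple_graph_def by auto
  obtain u where u: "u \<in> VG" using assms(3) by blast
  have "finite (VH u)" "\<forall>x y. EH u x y \<longrightarrow> EH u y x" using assms(2) u unfolding simple_graph_def by auto
  then have "0 < boxicity (VH u) (EH u)" using boxicity_rep by blast
  also have "boxicity (VH u) (EH u) \<le> ?s" using finG u by (intro member_le_sum) auto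
  finally have spos: "0 < ?s" .
  have rep: "box_representable (gjoin_verts VG VH) (gjoin_adj EG EH) ?s"
    using upper_rep[OF assms(1,2)] .
  have up: "?b \<le> ?s" using boxicity_le[OF spos rep] .
  have brep: "box_representable (gjoin_verts VG VH) (gjoin_adj EG EH) ?b"
    unfolding boxicity_def
    using LeastI[of "\<lambda>l. 0 < l \<and> box_representable (gjoin_verts VG VH) (gjoin_adj EG EH) l" ?s] spos rep by auto
  let ?M = "{(\<Sum>u\<in>C. boxicity (VH u) (EH u)) | C.
              is_clique VG EG C \<and> (\<forall>u\<in>C. \<not> complete_graph (VH u) (EH u))}"
  have "?M \<subseteq> (\<lambda>C. \<Sum>u\<in>C. boxicity (VH u) (EH u)) ` Pow VG" unfolding is_clique_def by auto
  then have finM: "finite ?M" using finG finite_subset by blast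
  have "is_clique VG EG {}" unfolding is_clique_def by auto
  then have neM: "?M \<noteq> {}" by auto
  have "\<forall>m\<in>?M. m \<le> ?b" using lower_bound[OF assms(1,2) _ _ brep] by blast
  then have "Max ?M \<le> ?b" using Max_le_iff[OF finM neM] by blast
  then show ?thesis using up by blast
qed

end
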